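(* Let $m\ge1$ be an integer. For real $H>1$ let $\mathcal P_m(H)$ be the set of monic self-reciprocal polynomials $P\in\mathbb Z[t]$ of degree $2(m+1)$ having $2m$ roots on the complex unit circle and two positive real roots $\alpha,\alpha^{-1}$ with $1<\alpha\le H$, and let $\mathcal P^R_m(H)$ be the set of reducible (over $\mathbb Q$) polynomials in $\mathcal P_m(H)$. Then there is $C_2>0$ depending only on $m$ such that \[ \#\mathcal P^R_m(H)\le C_2\,H^{m}\quad\text{for all } H>1 . \]
   Context: A polynomial $P$ of degree $n$ is self-reciprocal if $P(t)=t^nP(t^{-1})$. *)

theory Defs
  imports "HOL-Computational_Algebra.Computational_Algebra"
begin

definition self_reciprocal :: "int poly \<Rightarrow> bool" where
  "self_reciprocal P \<longleftrightarrow>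
     (\<forall>t::complex. t \<noteq> 0 \<longrightarrow>
        poly (map_poly of_int P) t = t ^ degree P * poly (map_poly of_int P) (inverse t))"

definition Pset :: "nat \<Rightarrow> real \<Rightarrow> int poly set" where
  "Pset m H = {P. lead_coeff P = 1 \<and> degree P = 2 * (m + 1) \<and> self_reciprocal P \<and>
     (\<Sum>z\<in>{z::complex. poly (map_poly of_int P) z = 0 \<and> cmod z = 1}.
         order z (map_poly of_int P)) = 2 * m \<and>
     (\<exists>\<alpha>::real. 1 < \<alpha> \<and> \<alpha> \<le> H \<and> poly (map_poly of_int P) \<alpha> = 0
                 \<and> poly (map_poly of_int P) (inverse \<alpha>) = 0)}"

definition PRset :: "nat \<Rightarrow> real \<Rightarrow> int poly set" where
  "PRset m H = {P \<in> Pset m H. \<not> irreducible (map_poly (of_int :: int \<Rightarrow> rat) P)}"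

end

theory Submission
  imports Defs "Berlekamp_Zassenhaus.Factor_Bound"
begin

lemma order_prod_linear:
  "Polynomial.order z (\<Prod>a\<leftarrow>as. [:- a, 1:]) = count (mset as) (z::complex)"
proof (induction as)
  case Nil
  then show ?case by (simp add: order_0I)
next
  case (Cons a as)
  have nz: "[:- a, 1:] * (\<Prod>a\<leftarrow>as. [:- a, 1:]) \<noteq> (0::complex poly)"
  proof -
    have h1: "[:- a, 1:] \<noteq> (0::complex poly)" by simp
    have h2: "(\<Prod>a\<leftarrow>as. [:- a, 1:]) \<noteq> (0::complex poly)"
      unfolding prod_list_zero_iff by auto
    show ?thesis using h1 h2 by (simp only: mult_eq_0_iff) simp
  qed
  have "Polynomial.order z (\<Prod>a\<leftarrow>a#as. [:- a, 1:]) =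
     Polynomial.order z ([:- a, 1:] * (\<Prod>a\<leftarrow>as. [:- a, 1:]))" by simp
  also have "\<dots> = Polynomial.order z [:- a, 1:] + Polynomial.order z (\<Prod>a\<leftarrow>as. [:- a, 1:])"
    by (rule order_mult[OF nz])
  also have "Polynomial.order z [:- a, 1:] = (if a = z then 1 else 0)"
    using order_linear'[of z "-a"] by simp
  finally show ?case using Cons by simp
qed

lemma self_rec_coeff:
  assumes "self_reciprocal P" "k \<le> degree P"
  shows "poly.coeff P k = poly.coeff P (degree P - k)"
proof -
  define p where "p = (of_int_poly P :: complex poly)"
  have dp: "degree p = degree P" unfolding p_def by (rule of_int_hom.degree_map_poly_hom)
  have all: "\<forall>t::complex. t \<noteq> 0 \<longrightarrow> poly p t = t ^ degree P * poly p (inverse t)"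
    using assms(1) unfolding self_reciprocal_def p_def .
  have h: "poly (p - reflect_poly p) t = 0" if t: "t \<noteq> 0" for t
  proof -
    have e: "poly p t = t ^ degree P * poly p (inverse t)" using mp[OF spec[OF all, of t] t] .
    have "poly (reflect_poly p) t = t ^ degree p * poly p (inverse t)"
      by (rule poly_reflect_poly_nz[OF t])
    hence "poly (reflect_poly p) t = poly p t" unfolding dp e[symmetric] .
    thus ?thesis by (simp only: poly_diff) simp
  qed
  have "p - reflect_poly p = 0"
  proof (rule ccontr)
    assume "p - reflect_poly p \<noteq> 0"
    hence fin: "finite {t. poly (p - reflect_poly p) t = 0}" by (rule poly_roots_finite)
    have "UNIV \<subseteq> insert 0 {t. poly (p - reflect_poly p) t = 0}" using h by blast
    hence "finite (UNIV :: complex set)" using fin finite_subset by blast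
    thus False using infinite_UNIV_char_0 by blast
  qed
  hence pe: "reflect_poly p = p" by simp
  have "poly.coeff p k = poly.coeff (reflect_poly p) k" by (simp only: pe)
  also have "\<dots> = poly.coeff p (degree p - k)"
    using assms(2) dp by (simp only: coeff_reflect_poly) simp
  finally have "poly.coeff p k = poly.coeff p (degree p - k)" .
  thus ?thesis unfolding p_def dp[unfolded p_def] by simp
qed


lemma prod_list_map_one:
  "(\<forall>x\<in>set xs. f x = (1::real)) \<Longrightarrow> prod_list (map f xs) = 1"
  by (induction xs) auto

lemma roots_structure:
  assumes "P \<in> Pset m H"
  shows "\<exists>\<alpha>::real. 1 < \<alpha> \<and> \<alpha> \<le> H \<and>
     count (mset (complex_roots_int P)) (complex_of_real \<alpha>) = 1 \<and>
     (\<forall>r\<in>set (complex_roots_int P). r \<noteq> complex_of_real \<alpha> \<longrightarrow> cmod r \<le> 1) \<and>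
     0 \<notin> set (complex_roots_int P) \<and> mahler_measure P = \<alpha>"
proof -
  from assms have lc: "lead_coeff P = 1" and dg: "degree P = 2 * (m + 1)"
    and sumo: "(\<Sum>z\<in>{z::complex. poly (of_int_poly P) z = 0 \<and> cmod z = 1}.
         Polynomial.order z (of_int_poly P)) = 2 * m"
    and ex: "\<exists>\<alpha>::real. 1 < \<alpha> \<and> \<alpha> \<le> H \<and> poly (of_int_poly P) \<alpha> = 0
                 \<and> poly (of_int_poly P) (inverse \<alpha>) = 0"
    unfolding Pset_def by auto
  from ex obtain \<alpha> :: real where a1: "1 < \<alpha>" and aH: "\<alpha> \<le> H"
    and r1: "poly (of_int_poly P) \<alpha> = 0" and r2: "poly (of_int_poly P) (inverse \<alpha>) = 0"
    by auto
  define p where "p = (of_int_poly P :: complex poly)"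
  define rs where "rs = complex_roots_int P"
  have lcp: "lead_coeff p = 1" unfolding p_def using lc by simp
  have p_eq: "p = (\<Prod>a\<leftarrow>rs. [:- a, 1:])"
    using reconstruct_with_type_conversion[of P] lcp unfolding p_def rs_def by simp
  have len: "length rs = 2 * (m + 1)" unfolding rs_def using complex_roots_int(2)[of P] dg by simp
  have ord: "\<And>z. Polynomial.order z p = count (mset rs) z"
    unfolding p_eq by (rule order_prod_linear)
  have root_iff: "\<And>z. poly p z = 0 \<longleftrightarrow> z \<in> set rs"
    unfolding p_eq poly_prod_list_zero_iff by auto
  define R where "R = mset rs"
  define R1 where "R1 = filter_mset (\<lambda>z. cmod z = 1) R"
  define R2 where "R2 = filter_mset (\<lambda>z. cmod z \<noteq> 1) R"
  have setR1: "{z::complex. poly (of_int_poly P) z = 0 \<and> cmod z = 1} = set_mset R1"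
    using root_iff unfolding p_def R1_def R_def by auto
  have "size R1 = sum (count R1) (set_mset R1)" by (rule size_multiset_overloaded_eq)
  also have "\<dots> = sum (\<lambda>z. Polynomial.order z p) (set_mset R1)"
    by (rule sum.cong) (auto simp: ord R1_def R_def)
  also have "\<dots> = 2 * m" using sumo setR1 unfolding p_def by simp
  finally have s1: "size R1 = 2 * m" .
  have RR: "R = R1 + R2" unfolding R1_def R2_def by (rule multiset_partition)
  have "size R = 2 * (m + 1)" unfolding R_def using len by simp
  hence s2: "size R2 = 2" using RR s1 by simp
  define A where "A = complex_of_real \<alpha>"
  define B where "B = complex_of_real (inverse \<alpha>)"
  have pr: "p = map_poly complex_of_real (of_int_poly P)"
    unfolding p_def by (simp add: map_poly_map_poly o_def)
  have "poly p A = 0" unfolding pr A_def of_real_hom.poly_map_poly using r1 by simp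
  hence AR: "A \<in># R" using root_iff unfolding R_def by simp
  have "poly p B = 0" unfolding pr B_def of_real_hom.poly_map_poly using r2 by simp
  hence BR: "B \<in># R" using root_iff unfolding R_def by simp
  have cA: "cmod A = \<alpha>" unfolding A_def using a1 by simp
  have cB: "cmod B = inverse \<alpha>" unfolding B_def using a1 by (simp add: norm_inverse)
  have ib: "inverse \<alpha> < 1" using a1 by (simp add: inverse_less_1_iff)
  have AB: "A \<noteq> B" using cA cB a1 ib by auto
  have AR2: "A \<in># R2" using AR cA a1 unfolding R2_def by simp
  have BR2: "B \<in># R2" using BR cB ib a1 unfolding R2_def by simp
  from multi_member_split[OF AR2] obtain R3 where R3: "R2 = add_mset A R3" by blast
  have "B \<in># R3" using BR2 AB R3 by simp
  from multi_member_split[OF this] obtain R4 where R4: "R3 = add_mset B R4" by blast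
  have "R4 = {#}" using s2 R3 R4 by simp
  hence R2e: "R2 = {#A, B#}" using R3 R4 by simp
  have R1c: "\<And>z. z \<in># R1 \<Longrightarrow> cmod z = 1" unfolding R1_def by simp
  have cntA: "count R A = 1"
  proof -
    have "count R1 A = 0" using R1c cA a1 by (metis count_eq_zero_iff less_irrefl)
    thus ?thesis using RR R2e AB by simp
  qed
  have others: "\<forall>r\<in>set rs. r \<noteq> A \<longrightarrow> cmod r \<le> 1"
  proof (intro ballI impI)
    fix r assume "r \<in> set rs" "r \<noteq> A"
    hence "r \<in># R" unfolding R_def by simp
    hence "r \<in># R1 + R2" using RR by simp
    thus "cmod r \<le> 1" using R1c R2e \<open>r \<noteq> A\<close> cB ib by auto
  qed
  have zero: "0 \<notin> set rs"
  proof
    assume "0 \<in> set rs"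
    hence "0 \<in># R" unfolding R_def by simp
    hence "0 \<in># R1 + R2" using RR by simp
    moreover have "A \<noteq> 0" "B \<noteq> 0" using cA cB a1 by auto
    ultimately show False using R1c R2e by fastforce
  qed
  have "mahler_measure P = (\<Prod>a\<leftarrow>rs. max 1 (cmod a))"
    unfolding mahler_measure_def mahler_measure_poly_def rs_def complex_roots_int_def
    using lcp unfolding p_def by simp
  also have "\<dots> = prod_mset (image_mset (\<lambda>a. max 1 (cmod a)) R)"
    unfolding R_def by (simp add: prod_mset_prod_list[symmetric])
  also have "\<dots> = prod_mset (image_mset (\<lambda>a. max 1 (cmod a)) R1) * (max 1 (cmod A) * max 1 (cmod B))"
    unfolding RR R2e by simp
  also have "prod_mset (image_mset (\<lambda>a. max 1 (cmod a)) R1) = 1"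
    by (rule prod_mset.neutral) (auto dest: R1c)
  finally have "mahler_measure P = \<alpha>" using cA cB a1 ib by simp
  have c1: "count (mset (complex_roots_int P)) (complex_of_real \<alpha>) = 1"
    using cntA unfolding R_def rs_def A_def .
  have c2: "\<forall>r\<in>set (complex_roots_int P). r \<noteq> complex_of_real \<alpha> \<longrightarrow> cmod r \<le> 1"
    using others unfolding rs_def A_def .
  have c3: "0 \<notin> set (complex_roots_int P)" using zero unfolding rs_def .
  show ?thesis
    by (rule exI[of _ \<alpha>]) (intro conjI a1 aH c1 c2 c3 \<open>mahler_measure P = \<alpha>\<close>)
qed


lemma good_factor:
  assumes PS: "P \<in> Pset m H" and PGK: "P = G * K" and dG: "degree G > 0"
    and cntA: "count (mset (complex_roots_int P)) A = 1"
    and oth: "\<forall>r\<in>set (complex_roots_int P). r \<noteq> A \<longrightarrow> cmod r \<le> 1"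
    and z0: "0 \<notin> set (complex_roots_int P)"
    and nA: "A \<notin> set (complex_roots_int G)"
  shows "degree G \<le> 2 * m + 2 \<and> (\<forall>k. \<bar>poly.coeff G k\<bar> \<le> 4 ^ (m + 1)) \<and> G dvd P \<and>
         (\<exists>z::complex. z \<noteq> 0 \<and> poly (of_int_poly G) z = 0)"
proof -
  from PS have lc: "lead_coeff P = 1" and dg: "degree P = 2 * (m + 1)"
    unfolding Pset_def by auto
  have P0: "P \<noteq> 0" using lc by auto
  have G0: "G \<noteq> 0" and K0: "K \<noteq> 0" using P0 PGK by auto
  have "lead_coeff G * lead_coeff K = 1" using lc PGK by (simp add: lead_coeff_mult)
  hence lcG: "\<bar>lead_coeff G\<bar> = 1" using zmult_eq_1_iff by auto
  have degG: "degree G \<le> 2 * m + 2" using dg PGK G0 K0 by (simp add: degree_mult_eq)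
  have msum: "mset (complex_roots_int P) = mset (complex_roots_int G) + mset (complex_roots_int K)"
  proof -
    have e: "(of_int_poly (G * K) :: complex poly) = of_int_poly G * of_int_poly K"
      by (simp add: hom_distribs)
    show ?thesis unfolding complex_roots_int_def PGK e
      by (rule complex_roots_complex_prod) (use G0 K0 in auto)
  qed
  have sub: "set (complex_roots_int G) \<subseteq> set (complex_roots_int P)"
  proof
    fix x assume "x \<in> set (complex_roots_int G)"
    hence "x \<in># mset (complex_roots_int P)" unfolding msum by simp
    thus "x \<in> set (complex_roots_int P)" by simp
  qed
  have MG: "mahler_measure G = 1"
  proof -
    have "mahler_measure G = cmod (lead_coeff (of_int_poly G :: complex poly)) *
        (\<Prod>a\<leftarrow>complex_roots_int G. max 1 (cmod a))"
      unfolding mahler_measure_def mahler_measure_poly_def complex_roots_int_def by simp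
    also have "(\<Prod>a\<leftarrow>complex_roots_int G. max 1 (cmod a)) = 1"
      by (rule prod_list_map_one) (use sub oth nA in force)
    finally show ?thesis using lcG by simp
  qed
  have cb: "\<bar>poly.coeff G k\<bar> \<le> 4 ^ (m + 1)" for k
  proof -
    have "real_of_int \<bar>poly.coeff G k\<bar> \<le> real (degree G choose k) * mahler_measure G"
      by (rule Mignotte_bound)
    also have "\<dots> = real (degree G choose k)" using MG by simp
    also have "\<dots> \<le> 2 ^ degree G" 
      using of_nat_mono[OF binomial_le_pow2[of "degree G" k], where 'a=real] by simp
    also have "(2::real) ^ degree G \<le> 2 ^ (2 * m + 2)"
      by (rule power_increasing) (use degG in auto)
    also have "(2::real) ^ (2 * m + 2) = 2 ^ (2 * (m + 1))" by simp
    also have "\<dots> = (2 ^ 2) ^ (m + 1)" by (rule power_mult)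
    also have "\<dots> = (4::real) ^ (m + 1)" by simp
    finally show ?thesis by (metis of_int_le_iff of_int_numeral of_int_power)
  qed
  have "complex_roots_int G \<noteq> []"
    using complex_roots_int(2)[of G] dG by auto
  then obtain z where zG: "z \<in> set (complex_roots_int G)" by (cases "complex_roots_int G") auto
  have "z \<noteq> 0" using zG sub z0 by auto
  moreover have "poly (of_int_poly G) z = 0"
  proof -
    have "poly (of_int_poly G) z = poly (Polynomial.smult (lead_coeff (of_int_poly G))
        (\<Prod>a\<leftarrow>complex_roots_int G. [:- a, 1:])) z"
      by (simp only: reconstruct_with_type_conversion)
    also have "\<dots> = 0" using linear_poly_root[OF zG] by simp
    finally show ?thesis .
  qed
  ultimately show ?thesis using degG cb PGK by auto
qed


definition Gset :: "nat \<Rightarrow> int poly set" where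
  "Gset m = {G. degree G \<le> 2 * m + 2 \<and> (\<forall>k. \<bar>poly.coeff G k\<bar> \<le> 4 ^ (m + 1))}"

lemma exists_factor:
  assumes "P \<in> PRset m H"
  shows "\<exists>G. G \<in> Gset m \<and> G dvd P \<and> (\<exists>z::complex. z \<noteq> 0 \<and> poly (of_int_poly G) z = 0)"
proof -
  from assms have PS: "P \<in> Pset m H" and irr: "\<not> irreducible (of_int_poly P :: rat poly)"
    unfolding PRset_def by auto
  from PS have lc: "lead_coeff P = 1" and dg: "degree P = 2 * (m + 1)"
    unfolding Pset_def by auto
  define Q where "Q = (of_int_poly P :: rat poly)"
  have dQ: "degree Q = degree P" unfolding Q_def by (rule of_int_hom.degree_map_poly_hom)
  have Q0: "Q \<noteq> 0" using dQ dg by auto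
  have Qu: "\<not> is_unit Q" using is_unit_iff_degree[OF Q0] dQ dg by simp
  from irr Q0 Qu obtain a b where ab: "Q = a * b" and na: "\<not> is_unit a" and nb: "\<not> is_unit b"
    unfolding Q_def[symmetric] irreducible_def by blast
  have a0: "a \<noteq> 0" and b0: "b \<noteq> 0" using ab Q0 by auto
  have da: "degree a > 0" using na is_unit_iff_degree[OF a0] a0 by auto
  have db: "degree b > 0" using nb is_unit_iff_degree[OF b0] b0 by auto
  from rat_to_int_factor[OF ab[unfolded Q_def]] obtain g h where
    Pgh: "P = g * h" and dg': "degree g = degree a" and dh': "degree h = degree b" by blast
  from roots_structure[OF PS] obtain \<alpha> :: real where
    c1: "count (mset (complex_roots_int P)) (complex_of_real \<alpha>) = 1"
    and c2: "\<forall>r\<in>set (complex_roots_int P). r \<noteq> complex_of_real \<alpha> \<longrightarrow> cmod r \<le> 1"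
    and c3: "0 \<notin> set (complex_roots_int P)" by blast
  have P0: "P \<noteq> 0" using lc by auto
  have g0: "g \<noteq> 0" and h0: "h \<noteq> 0" using P0 Pgh by auto
  have e: "(of_int_poly (g * h) :: complex poly) = of_int_poly g * of_int_poly h"
    by (simp add: hom_distribs)
  have msum: "mset (complex_roots_int P) = mset (complex_roots_int g) + mset (complex_roots_int h)"
    unfolding complex_roots_int_def Pgh e
    by (rule complex_roots_complex_prod) (use g0 h0 in auto)
  have "count (mset (complex_roots_int g)) (complex_of_real \<alpha>) = 0 \<or>
        count (mset (complex_roots_int h)) (complex_of_real \<alpha>) = 0"
  proof -
    have "count (mset (complex_roots_int g)) (complex_of_real \<alpha>) +
        count (mset (complex_roots_int h)) (complex_of_real \<alpha>) = 1"
      using c1 unfolding msum by (simp only: count_union)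
    thus ?thesis by linarith
  qed
  thus ?thesis
  proof
    assume "count (mset (complex_roots_int g)) (complex_of_real \<alpha>) = 0"
    hence nA: "complex_of_real \<alpha> \<notin> set (complex_roots_int g)"
      using count_eq_zero_iff[of "mset (complex_roots_int g)" "complex_of_real \<alpha>"] by simp
    have "g \<in> Gset m \<and> g dvd P \<and> (\<exists>z::complex. z \<noteq> 0 \<and> poly (of_int_poly g) z = 0)"
      using good_factor[OF PS Pgh _ c1 c2 c3 nA] da dg' unfolding Gset_def by auto
    thus ?thesis by blast
  next
    assume "count (mset (complex_roots_int h)) (complex_of_real \<alpha>) = 0"
    hence nA: "complex_of_real \<alpha> \<notin> set (complex_roots_int h)"
      using count_eq_zero_iff[of "mset (complex_roots_int h)" "complex_of_real \<alpha>"] by simp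
    have Phg: "P = h * g" using Pgh by (simp add: mult.commute)
    have "h \<in> Gset m \<and> h dvd P \<and> (\<exists>z::complex. z \<noteq> 0 \<and> poly (of_int_poly h) z = 0)"
      using good_factor[OF PS Phg _ c1 c2 c3 nA] db dh' unfolding Gset_def by auto
    thus ?thesis by blast
  qed
qed

lemma coeff_bound:
  assumes "P \<in> Pset m H"
  shows "real_of_int \<bar>poly.coeff P k\<bar> \<le> 4 ^ (m + 1) * H"
proof -
  from assms have dg: "degree P = 2 * (m + 1)" unfolding Pset_def by auto
  from roots_structure[OF assms] obtain \<alpha> :: real where
    a1: "1 < \<alpha>" and aH: "\<alpha> \<le> H" and M: "mahler_measure P = \<alpha>" by blast
  have "real_of_int \<bar>poly.coeff P k\<bar> \<le> real (degree P choose k) * mahler_measure P"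
    by (rule Mignotte_bound)
  also have "\<dots> \<le> 2 ^ degree P * H"
  proof (rule mult_mono)
    show "real (degree P choose k) \<le> 2 ^ degree P"
      using of_nat_mono[OF binomial_le_pow2[of "degree P" k], where 'a=real] by simp
  qed (use M aH a1 in auto)
  also have "(2::real) ^ degree P = 4 ^ (m + 1)"
  proof -
    have "(2::real) ^ degree P = 2 ^ (2 * (m + 1))" using dg by simp
    also have "\<dots> = (2 ^ 2) ^ (m + 1)" by (rule power_mult)
    also have "\<dots> = (4::real) ^ (m + 1)" by simp
    finally show ?thesis .
  qed
  finally show ?thesis .
qed

lemma inj_lemma:
  assumes P1: "P1 \<in> Pset m H" and P2: "P2 \<in> Pset m H"
    and d1: "G dvd P1" and d2: "G dvd P2"
    and z: "z \<noteq> 0" "poly (of_int_poly G) z = (0::complex)"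
    and c: "\<forall>k. 1 \<le> k \<and> k \<le> m \<longrightarrow> poly.coeff P1 k = poly.coeff P2 k"
  shows "P1 = P2"
proof -
  from P1 have lc1: "lead_coeff P1 = 1" and dg1: "degree P1 = 2 * (m + 1)"
    and s1: "self_reciprocal P1" unfolding Pset_def by auto
  from P2 have lc2: "lead_coeff P2 = 1" and dg2: "degree P2 = 2 * (m + 1)"
    and s2: "self_reciprocal P2" unfolding Pset_def by auto
  have sym1: "poly.coeff P1 k = poly.coeff P1 (2 * (m + 1) - k)" if "k \<le> 2 * (m + 1)" for k
  proof -
    have "poly.coeff P1 k = poly.coeff P1 (degree P1 - k)"
      by (rule self_rec_coeff[OF s1]) (use that in \<open>simp add: dg1\<close>)
    thus ?thesis unfolding dg1 .
  qed
  have sym2: "poly.coeff P2 k = poly.coeff P2 (2 * (m + 1) - k)" if "k \<le> 2 * (m + 1)" for k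
  proof -
    have "poly.coeff P2 k = poly.coeff P2 (degree P2 - k)"
      by (rule self_rec_coeff[OF s2]) (use that in \<open>simp add: dg2\<close>)
    thus ?thesis unfolding dg2 .
  qed
  have c0: "poly.coeff P1 0 = poly.coeff P2 0"
    using sym1[of 0] sym2[of 0] lc1 lc2 dg1 dg2 by simp
  have eqk: "poly.coeff P1 k = poly.coeff P2 k" if k: "k \<noteq> m + 1" for k
  proof -
    consider "k = 0" | "1 \<le> k \<and> k \<le> m" | "m + 2 \<le> k \<and> k \<le> 2 * (m + 1)" | "k > 2 * (m + 1)"
      using k by linarith
    thus ?thesis
    proof cases
      case 1 thus ?thesis using c0 by simp
    next
      case 2 thus ?thesis using c by simp
    next
      case 3
      define j where "j = 2 * (m + 1) - k"
      have j: "j \<le> m" unfolding j_def using 3 by arith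
      have "poly.coeff P1 j = poly.coeff P2 j"
        using c0 c j by (cases "j = 0") auto
      thus ?thesis using sym1[of k] sym2[of k] 3 unfolding j_def by simp
    next
      case 4 thus ?thesis using dg1 dg2 by (simp add: coeff_eq_0)
    qed
  qed
  define cc where "cc = poly.coeff P1 (m + 1) - poly.coeff P2 (m + 1)"
  have D: "P1 - P2 = Polynomial.monom cc (m + 1)"
    by (rule poly_eqI) (use eqk in \<open>auto simp: coeff_monom cc_def\<close>)
  from d1 obtain K1 where K1: "P1 = G * K1" by (rule dvdE)
  from d2 obtain K2 where K2: "P2 = G * K2" by (rule dvdE)
  have r1: "poly (of_int_poly P1) z = (0::complex)"
    unfolding K1 by (simp add: hom_distribs z(2))
  have r2: "poly (of_int_poly P2) z = (0::complex)"
    unfolding K2 by (simp add: hom_distribs z(2))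
  have "poly (of_int_poly (P1 - P2)) z = (0::complex)"
    using r1 r2 by (simp add: hom_distribs)
  hence "poly (of_int_poly (Polynomial.monom cc (m + 1))) z = (0::complex)" unfolding D .
  hence "(of_int cc :: complex) * z ^ (m + 1) = 0"
    by (simp add: of_int_hom.map_poly_hom_monom poly_monom)
  hence "cc = 0" using z(1) by simp
  hence "P1 - P2 = 0" using D by simp
  thus ?thesis by simp
qed


lemma finite_Gset: "finite (Gset m)"
proof -
  let ?b = "(4::int) ^ (m + 1)"
  let ?f = "\<lambda>G::int poly. map (poly.coeff G) [0..<2 * m + 3]"
  have "inj_on ?f (Gset m)"
  proof (rule inj_onI)
    fix G1 G2 assume G1: "G1 \<in> Gset m" and G2: "G2 \<in> Gset m" and eq: "?f G1 = ?f G2"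
    show "G1 = G2"
    proof (rule poly_eqI)
      fix k
      show "poly.coeff G1 k = poly.coeff G2 k"
      proof (cases "k < 2 * m + 3")
        case True
        from eq have "\<forall>x\<in>{0..<2 * m + 3}. poly.coeff G1 x = poly.coeff G2 x" by simp
        thus ?thesis using True by simp
      next
        case False
        hence "degree G1 < k" "degree G2 < k" using G1 G2 unfolding Gset_def by auto
        thus ?thesis by (simp add: coeff_eq_0)
      qed
    qed
  qed
  moreover have "?f ` Gset m \<subseteq> {xs. set xs \<subseteq> {-?b..?b} \<and> length xs = 2 * m + 3}"
  proof (intro subsetI)
    fix xs assume "xs \<in> ?f ` Gset m"
    then obtain G where G: "G \<in> Gset m" and xs: "xs = ?f G" by blast
    have "\<bar>poly.coeff G k\<bar> \<le> ?b" for k using G unfolding Gset_def by blast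
    hence "- ?b \<le> poly.coeff G k \<and> poly.coeff G k \<le> ?b" for k by (meson abs_le_iff minus_le_iff)
    thus "xs \<in> {xs. set xs \<subseteq> {-?b..?b} \<and> length xs = 2 * m + 3}" using xs by auto
  qed
  moreover have "finite {xs. set xs \<subseteq> {-?b..?b} \<and> length xs = 2 * m + 3}"
    by (rule finite_lists_length_eq) simp
  ultimately show ?thesis by (rule inj_on_finite)
qed

theorem lemma4:
  fixes m :: nat
  assumes "m \<ge> 1"
  shows "\<exists>C2>0. \<forall>H::real. H > 1 \<longrightarrow>
           finite (PRset m H) \<and> real (card (PRset m H)) \<le> C2 * H ^ m"
proof -
  have finG: "finite (Gset m)" by (rule finite_Gset)
  define C where "C = real (card (Gset m)) * (3 * 4 ^ (m + 1)) ^ m + 1"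
  have C0: "0 \<le> real (card (Gset m)) * (3 * 4 ^ (m + 1)) ^ m" by simp
  have Cpos: "C > 0" unfolding C_def using C0 by linarith
  have main: "finite (PRset m H) \<and> real (card (PRset m H)) \<le> C * H ^ m" if H1: "H > 1" for H :: real
  proof -
    define b where "b = \<lfloor>4 ^ (m + 1) * H\<rfloor>"
    define L where "L = {xs. set xs \<subseteq> {-b..b} \<and> length xs = m}"
    define Gf where "Gf = (\<lambda>P. SOME G. G \<in> Gset m \<and> G dvd P \<and>
                       (\<exists>z::complex. z \<noteq> 0 \<and> poly (of_int_poly G) z = 0))"
    define sig where "sig = (\<lambda>P. (Gf P, map (poly.coeff P) [1..<m+1]))"
    have GfP: "Gf P \<in> Gset m \<and> Gf P dvd P \<and>
        (\<exists>z::complex. z \<noteq> 0 \<and> poly (of_int_poly (Gf P)) z = 0)" if "P \<in> PRset m H" for P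
      unfolding Gf_def by (rule someI_ex[OF exists_factor[OF that]])
    have inj: "inj_on sig (PRset m H)"
    proof (rule inj_onI)
      fix P1 P2 assume P1: "P1 \<in> PRset m H" and P2: "P2 \<in> PRset m H" and eq: "sig P1 = sig P2"
      have PS1: "P1 \<in> Pset m H" using P1 unfolding PRset_def by auto
      have PS2: "P2 \<in> Pset m H" using P2 unfolding PRset_def by auto
      from eq have gq: "Gf P1 = Gf P2" and mq: "map (poly.coeff P1) [1..<m+1] = map (poly.coeff P2) [1..<m+1]"
        unfolding sig_def by auto
      obtain z :: complex where z: "z \<noteq> 0" "poly (of_int_poly (Gf P1)) z = 0"
        using GfP[OF P1] by blast
      have c: "\<forall>k. 1 \<le> k \<and> k \<le> m \<longrightarrow> poly.coeff P1 k = poly.coeff P2 k"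
      proof (intro allI impI)
        fix k assume k: "1 \<le> k \<and> k \<le> m"
        have all: "\<forall>x\<in>set [1..<m+1]. poly.coeff P1 x = poly.coeff P2 x"
          using mq unfolding map_eq_conv .
        have "k \<in> set [1..<m+1]" using k by (simp del: upt_Suc)
        thus "poly.coeff P1 k = poly.coeff P2 k" using all by blast
      qed
      have d1: "Gf P1 dvd P1" using GfP[OF P1] by blast
      have d2: "Gf P1 dvd P2" using GfP[OF P2] gq by simp
      show "P1 = P2" by (rule inj_lemma[OF PS1 PS2 d1 d2 z c])
    qed
    have img: "sig ` PRset m H \<subseteq> Gset m \<times> L"
    proof
      fix x assume "x \<in> sig ` PRset m H"
      then obtain P where P: "P \<in> PRset m H" and x: "x = sig P" by blast
      have PS: "P \<in> Pset m H" using P unfolding PRset_def by auto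
      have "map (poly.coeff P) [1..<m+1] \<in> L"
        unfolding L_def
      proof (intro CollectI conjI subsetI)
        fix c assume "c \<in> set (map (poly.coeff P) [1..<m+1])"
        then obtain k where c: "c = poly.coeff P k" by auto
        have "real_of_int \<bar>c\<bar> \<le> 4 ^ (m + 1) * H" using coeff_bound[OF PS, of k] c by simp
        hence "\<bar>c\<bar> \<le> b" unfolding b_def by (simp add: le_floor_iff)
        thus "c \<in> {-b..b}" by auto
      qed simp
      thus "x \<in> Gset m \<times> L" using GfP[OF P] x unfolding sig_def by auto
    qed
    have finL: "finite L" unfolding L_def by (rule finite_lists_length_eq) simp
    have finT: "finite (Gset m \<times> L)" using finG finL by simp
    have fin: "finite (PRset m H)" by (rule inj_on_finite[OF inj img finT])
    have "card (PRset m H) \<le> card (Gset m \<times> L)" by (rule card_inj_on_le[OF inj img finT])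
    also have "card (Gset m \<times> L) = card (Gset m) * card L" by (rule card_cartesian_product)
    also have "card L = (card {-b..b}) ^ m" unfolding L_def by (rule card_lists_length_eq) simp
    also have "card {-b..b} = nat (2 * b + 1)" by simp
    finally have cle: "card (PRset m H) \<le> card (Gset m) * nat (2 * b + 1) ^ m" .
    have one: "(1::real) \<le> 4 ^ (m + 1)" by (rule one_le_power) simp
    have "(4::real) ^ (m + 1) * 1 \<le> 4 ^ (m + 1) * H" by (rule mult_left_mono) (use H1 in auto)
    hence X1: "1 \<le> (4::real) ^ (m + 1) * H" using one by linarith
    hence "0 \<le> (4::real) ^ (m + 1) * H" by linarith
    hence b0: "0 \<le> b" unfolding b_def by (simp only: zero_le_floor)
    have bl: "real_of_int b \<le> 4 ^ (m + 1) * H" unfolding b_def by (rule of_int_floor_le)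
    have nb: "real (nat (2 * b + 1)) = 2 * real_of_int b + 1" using b0 by simp
    have "real (card (PRset m H)) \<le> real (card (Gset m) * nat (2 * b + 1) ^ m)"
      using cle by (rule of_nat_mono)
    also have "\<dots> = real (card (Gset m)) * (2 * real_of_int b + 1) ^ m"
      by (simp only: of_nat_mult semiring_1_class.of_nat_power nb)
    also have "\<dots> \<le> real (card (Gset m)) * (3 * 4 ^ (m + 1) * H) ^ m"
    proof (rule mult_left_mono)
      show "(2 * real_of_int b + 1) ^ m \<le> (3 * 4 ^ (m + 1) * H) ^ m"
        by (rule power_mono) (use bl X1 b0 in linarith)+
    qed simp
    also have "\<dots> = real (card (Gset m)) * (3 * 4 ^ (m + 1)) ^ m * H ^ m"
      by (simp add: power_mult_distrib)
    also have "\<dots> \<le> C * H ^ m"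
    proof -
      have "0 \<le> H ^ m" using H1 by simp
      thus ?thesis unfolding C_def by (simp add: distrib_right)
    qed
    finally show ?thesis using fin by simp
  qed
  show ?thesis using Cpos main by blast
qed

end
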